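(* Let $p,q$ be integers with $1+|p|<|q|$ and $\gcd(p,q)=1$, and assume $t(x)=x^2+px-q$ is irreducible in $\mathbb{Z}[x]$. Then every nonzero endomorphism $\phi$ of $\mathbb{Z}^2$ with nontrivial kernel is not FA-recognizable with respect to $\psi_{p,q}$, i.e. the relation $\{(u,v)\in\mathrm{Dom}_{p,q}^2:\psi_{p,q}(v)=\phi(\psi_{p,q}(u))\}$ is not FA-recognizable.
   Context: For $f,g\in\mathbb{Z}[x]$ write $f\sim g$ if $t$ divides $f-g$; identify $\mathbb{Z}^2$ with the additive group of $\mathbb{Z}[x]/\langle t\rangle$ via $(h_1,h_2)\mapsto[h_1x+h_2]_\sim$. Let $\Sigma_q=\{-(|q|-1),\dots,|q|-1\}$ with the order $-(|q|-1)<\dots<|q|-1$; a string $a_0a_1\dots a_n\in\Sigma_q^*$ represents the polynomial $a_nx^n+\dots+a_1x+a_0$, and two strings are equivalent if their polynomials are $\sim$-equivalent. $\mathrm{Dom}_{p,q}$ is the set of $w\in\Sigma_q^*$ such that no string strictly smaller than $w$ in the length-lexicographic order on $\Sigma_q^*$ is equivalent to $w$, and $\psi_{p,q}:\mathrm{Dom}_{p,q}\to\mathbb{Z}^2$ sends $w$ to the $\sim$-class of the polynomial it represents. Convolution of strings pads shorter strings with a new symbol $\diamond$ and stacks them letterwise; a relation on strings is FA-recognizable if the set of convolutions of its tuples is accepted by a finite automaton. *)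

theory Defs
  imports "HOL-Computational_Algebra.Polynomial" "HOL-Library.Product_Plus"
begin

definition Sigma :: "int \<Rightarrow> int set" where
  "Sigma q = {-(\<bar>q\<bar> - 1) .. \<bar>q\<bar> - 1}"

definition strings :: "int \<Rightarrow> int list set" where
  "strings q = {w. set w \<subseteq> Sigma q}"

definition tpoly :: "int \<Rightarrow> int \<Rightarrow> int poly" where
  "tpoly p q = [:-q, p, 1:]"

text \<open>The string a0 a1 ... an represents an x^n + ... + a1 x + a0, i.e. Poly [a0,...,an].\<close>
definition str_equiv :: "int \<Rightarrow> int \<Rightarrow> int list \<Rightarrow> int list \<Rightarrow> bool" where
  "str_equiv p q u w \<longleftrightarrow> tpoly p q dvd (Poly u - Poly w)"

definition llex_less :: "int list \<Rightarrow> int list \<Rightarrow> bool" where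
  "llex_less u w \<longleftrightarrow> (u, w) \<in> lenlex {(a, b). a < b}"

definition Dom :: "int \<Rightarrow> int \<Rightarrow> int list set" where
  "Dom p q = {w \<in> strings q. \<not> (\<exists>u \<in> strings q. llex_less u w \<and> str_equiv p q u w)}"

text \<open>psi sends w to the pair (h1,h2) with h1 x + h2 equivalent to the polynomial of w.\<close>
definition psi :: "int \<Rightarrow> int \<Rightarrow> int list \<Rightarrow> int \<times> int" where
  "psi p q w = (THE h. tpoly p q dvd (Poly w - [:snd h, fst h:]))"

text \<open>Convolution of two strings; None plays the role of the padding symbol diamond.\<close>
definition conv :: "'a list \<Rightarrow> 'a list \<Rightarrow> ('a option \<times> 'a option) list" where
  "conv u v = map (\<lambda>i. (if i < length u then Some (u ! i) else None,
                          if i < length v then Some (v ! i) else None))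
                  [0..<max (length u) (length v)]"

definition FA_recognizable_lang :: "'a list set \<Rightarrow> bool" where
  "FA_recognizable_lang L \<longleftrightarrow>
     (\<exists>(Q :: nat set) (\<delta> :: nat \<Rightarrow> 'a \<Rightarrow> nat) s F.
        finite Q \<and> s \<in> Q \<and> (\<forall>r \<in> Q. \<forall>a. \<delta> r a \<in> Q) \<and> F \<subseteq> Q \<and>
        L = {w. foldl \<delta> s w \<in> F})"

definition FA_recognizable_rel :: "('a list \<times> 'a list) set \<Rightarrow> bool" where
  "FA_recognizable_rel R \<longleftrightarrow> FA_recognizable_lang {conv u v | u v. (u, v) \<in> R}"

definition group_endo :: "(int \<times> int \<Rightarrow> int \<times> int) \<Rightarrow> bool" where
  "group_endo \<phi> \<longleftrightarrow> (\<forall>a b. \<phi> (a + b) = \<phi> a + \<phi> b)"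

end

theory Submission imports Defs "HOL-Computational_Algebra.Polynomial_Factorial" begin

definition pp :: "int \<times> int \<Rightarrow> int poly" where "pp h = [:snd h, fst h:]"

fun rep :: "int \<Rightarrow> int \<Rightarrow> int list \<Rightarrow> int \<times> int" where
  "rep p q [] = (0, 0)"
| "rep p q (d # w) = (snd (rep p q w) - p * fst (rep p q w), q * fst (rep p q w) + d)"

lemma degree_tpoly[simp]: "degree (tpoly p q) = 2"
  by (simp add: tpoly_def)

lemma tpoly_nz[simp]: "tpoly p q \<noteq> 0"
  using degree_tpoly[of p q] by (metis degree_0 zero_neq_numeral)

lemma dvd_small_zero:
  assumes "tpoly p q dvd r" "degree r \<le> 1" shows "r = 0"
proof (rule ccontr)
  assume "r \<noteq> 0"
  from dvd_imp_degree_le[OF assms(1) this] assms(2) show False by simp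
qed

lemma pp_diff: "pp h - pp h' = pp (h - h')"
  by (cases h; cases h') (simp add: pp_def)

lemma pp_add: "pp h + pp h' = pp (h + h')"
  by (cases h; cases h') (simp add: pp_def)

lemma degree_pp: "degree (pp h) \<le> 1"
  by (simp add: pp_def)

lemma pp_eq0: "pp h = 0 \<longleftrightarrow> h = 0"
  by (cases h) (auto simp: pp_def zero_prod_def)

lemma pp_unique:
  assumes "tpoly p q dvd pp h - pp h'" shows "h = h'"
proof -
  have "pp (h - h') = 0" using dvd_small_zero[of p q "pp (h - h')"] assms degree_pp
    by (simp add: pp_diff)
  thus ?thesis by (simp add: pp_eq0)
qed

lemma rep_dvd: "tpoly p q dvd Poly w - pp (rep p q w)"
proof (induction w)
  case Nil
  then show ?case by (simp add: pp_def)
next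
  case (Cons d w)
  obtain h1 h2 where h: "rep p q w = (h1, h2)" by (cases "rep p q w")
  obtain g where g: "Poly w - [:h2, h1:] = tpoly p q * g"
    using Cons h by (auto simp: pp_def elim!: dvdE)
  have "Poly (d # w) - pp (rep p q (d # w)) = pCons d (Poly w) - [:q * h1 + d, h2 - p * h1:]"
    by (simp add: h pp_def)
  also have "\<dots> = tpoly p q * (pCons 0 g + [:h1:])"
  proof -
    have "Poly w = tpoly p q * g + [:h2, h1:]" using g by (simp add: algebra_simps)
    thus ?thesis
      by (simp add: tpoly_def algebra_simps pCons_eq_iff smult_add_right flip: pCons_one)
  qed
  finally show ?case by (metis dvd_triv_left)
qed

lemma rep_unique:
  assumes a: "tpoly p q dvd Poly w - pp h" shows "h = rep p q w"
proof -
  have e: "pp h - pp (rep p q w) = (Poly w - pp (rep p q w)) - (Poly w - pp h)" by simp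
  have "tpoly p q dvd pp h - pp (rep p q w)"
    unfolding e by (rule dvd_diff[OF rep_dvd a])
  thus ?thesis by (rule pp_unique)
qed

lemma psi_eq: "psi p q w = rep p q w"
  unfolding psi_def
proof (rule the_equality)
  show "tpoly p q dvd Poly w - [:snd (rep p q w), fst (rep p q w):]"
    using rep_dvd[of p q w] by (simp add: pp_def)
next
  fix h assume "tpoly p q dvd Poly w - [:snd h, fst h:]"
  thus "h = rep p q w" using rep_unique[of p q w h] by (simp add: pp_def)
qed

lemma psi_char: "tpoly p q dvd Poly w - pp h \<Longrightarrow> psi p q w = h"
  using rep_unique psi_eq by metis

lemma psi_dvd: "tpoly p q dvd Poly w - pp (psi p q w)"
  by (simp add: psi_eq rep_dvd)

lemma psi_Nil: "psi p q [] = 0"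
  by (simp add: psi_eq zero_prod_def)

lemma llex_irrefl: "\<not> llex_less u u"
  unfolding llex_less_def by (rule lenlex_irreflexive) simp

lemma llex_trans: "llex_less u v \<Longrightarrow> llex_less v w \<Longrightarrow> llex_less u w"
  unfolding llex_less_def by (erule lenlex_trans) (auto simp: trans_def)

lemma llex_total: "u \<noteq> w \<Longrightarrow> llex_less u w \<or> llex_less w u"
proof -
  have "total {(a::int, b). a < b}" by (auto simp: total_on_def)
  hence "total (lenlex {(a::int, b). a < b})" by (rule total_lenlex)
  thus "u \<noteq> w \<Longrightarrow> llex_less u w \<or> llex_less w u"
    unfolding llex_less_def total_on_def by blast
qed

lemma llex_shorter: "length u < length w \<Longrightarrow> llex_less u w"
  by (simp add: llex_less_def lenlex_conv)

lemma llex_length: "llex_less u w \<Longrightarrow> length u \<le> length w"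
  unfolding llex_less_def by (rule lenlex_length)

lemma Nil_Dom: "[] \<in> Dom p q"
  by (simp add: Dom_def strings_def llex_less_def)

lemma str_equiv_sym: "str_equiv p q u w \<Longrightarrow> str_equiv p q w u"
  unfolding str_equiv_def by (metis dvd_minus_iff minus_diff_eq)

lemma Dom_inj:
  assumes "u \<in> Dom p q" "w \<in> Dom p q" "str_equiv p q u w" shows "u = w"
proof (rule ccontr)
  assume "u \<noteq> w"
  then consider "llex_less u w" | "llex_less w u" using llex_total by blast
  thus False
  proof cases
    case 1 thus False using assms unfolding Dom_def by blast
  next
    case 2 thus False using assms str_equiv_sym unfolding Dom_def by blast
  qed
qed

lemma finite_min_llex:
  assumes "finite S" "S \<noteq> {}" shows "\<exists>m\<in>S. \<forall>u\<in>S. \<not> llex_less u m"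
  using assms
proof (induction S rule: finite_ne_induct)
  case (singleton x) thus ?case using llex_irrefl by auto
next
  case (insert x F)
  then obtain m where m: "m \<in> F" "\<forall>u\<in>F. \<not> llex_less u m" by blast
  show ?case
  proof (cases "llex_less x m")
    case True
    have "\<forall>u\<in>insert x F. \<not> llex_less u x"
      using m True llex_irrefl llex_trans by blast
    thus ?thesis by blast
  next
    case False thus ?thesis using m by blast
  qed
qed

lemma finite_Sigma: "finite (Sigma q)"
  by (simp add: Sigma_def)

lemma finite_strings_le: "finite {w \<in> strings q. length w \<le> n}"
  using finite_lists_length_le[OF finite_Sigma, of q n] by (simp add: strings_def)

lemma Dom_exists:
  assumes "w \<in> strings q" shows "\<exists>u \<in> Dom p q. str_equiv p q u w"
proof -
  let ?S = "{u \<in> strings q. length u \<le> length w \<and> str_equiv p q u w}"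
  have "finite ?S" by (rule finite_subset[OF _ finite_strings_le[of q "length w"]]) auto
  moreover have "w \<in> ?S" using assms by (simp add: str_equiv_def)
  ultimately obtain m where m: "m \<in> ?S" "\<forall>u\<in>?S. \<not> llex_less u m"
    using finite_min_llex[of ?S] by blast
  have "m \<in> Dom p q"
    unfolding Dom_def
  proof (safe)
    show "m \<in> strings q" using m by simp
  next
    fix u assume u: "u \<in> strings q" "llex_less u m" "str_equiv p q u m"
    have "length u \<le> length w" using llex_length[OF u(2)] m(1) by simp
    moreover have "str_equiv p q u w" using u(3) m(1) unfolding str_equiv_def
      by (metis (no_types, lifting) diff_add_cancel dvd_add mem_Collect_eq add_diff_eq)
    ultimately show False using m u by blast
  qed
  thus ?thesis using m by blast
qed


definition det2 :: "int \<times> int \<Rightarrow> int \<times> int \<Rightarrow> int" where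
  "det2 a b = fst a * snd b - snd a * fst b"

definition smul :: "int \<Rightarrow> int \<times> int \<Rightarrow> int \<times> int" where
  "smul n h = (n * fst h, n * snd h)"

lemma endo_0: "group_endo \<phi> \<Longrightarrow> \<phi> 0 = 0"
  unfolding group_endo_def by (metis add.right_neutral add_left_cancel)

lemma endo_diff: "group_endo \<phi> \<Longrightarrow> \<phi> (a - b) = \<phi> a - \<phi> b"
  unfolding group_endo_def by (metis diff_add_cancel eq_diff_eq)

lemma endo_smul_nat: "group_endo \<phi> \<Longrightarrow> \<phi> (smul (int n) h) = smul (int n) (\<phi> h)"
proof (induction n)
  case 0 thus ?case using endo_0 by (simp add: smul_def zero_prod_def)
next
  case (Suc n)
  have "smul (int (Suc n)) h = smul (int n) h + h"
    by (cases h) (simp add: smul_def algebra_simps)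
  moreover have "smul (int (Suc n)) (\<phi> h) = smul (int n) (\<phi> h) + \<phi> h"
    by (cases "\<phi> h") (simp add: smul_def algebra_simps)
  moreover have "\<phi> (a + b) = \<phi> a + \<phi> b" for a b using Suc.prems unfolding group_endo_def by blast
  ultimately show ?case using Suc.IH[OF Suc.prems] by simp
qed

lemma endo_smul: "group_endo \<phi> \<Longrightarrow> \<phi> (smul n h) = smul n (\<phi> h)"
proof (cases "n \<ge> 0")
  case True
  assume e: "group_endo \<phi>"
  obtain m where "n = int m" using True nonneg_eq_int by blast
  thus ?thesis using endo_smul_nat[OF e] by simp
next
  case False
  assume e: "group_endo \<phi>"
  obtain m where m0: "-n = int m" using False by (metis neg_0_le_iff_le nle_le nonneg_eq_int)
  hence m: "n = - int m" by simp
  have "smul n h = 0 - smul (int m) h" using m by (cases h) (simp add: smul_def)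
  hence "\<phi> (smul n h) = \<phi> 0 - \<phi> (smul (int m) h)" using endo_diff[OF e] by metis
  also have "\<dots> = 0 - smul (int m) (\<phi> h)" using endo_0[OF e] endo_smul_nat[OF e] by simp
  also have "\<dots> = smul n (\<phi> h)" using m by (cases "\<phi> h") (simp add: smul_def)
  finally show ?thesis .
qed

lemma smul_cancel: "smul n h = 0 \<Longrightarrow> n \<noteq> 0 \<Longrightarrow> h = 0"
  by (cases h) (simp add: smul_def zero_prod_def)

lemma cramer: "smul (det2 k h) z = smul (det2 z h) k + smul (det2 k z) h"
  by (cases k; cases h; cases z) (simp add: smul_def det2_def algebra_simps)

lemma ker_det:
  assumes e: "group_endo \<phi>" and nz: "\<phi> \<noteq> (\<lambda>_. 0)" and k: "\<phi> k = 0" and h: "\<phi> h = 0"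
  shows "det2 k h = 0"
proof (rule ccontr)
  assume d: "det2 k h \<noteq> 0"
  have "\<phi> z = 0" for z
  proof -
    have "smul (det2 k h) (\<phi> z) = \<phi> (smul (det2 k h) z)" using endo_smul[OF e] by simp
    also have "\<dots> = \<phi> (smul (det2 z h) k) + \<phi> (smul (det2 k z) h)"
      using e cramer unfolding group_endo_def by metis
    also have "\<dots> = 0" using endo_smul[OF e] k h by (simp add: smul_def zero_prod_def)
    finally show ?thesis using smul_cancel d by blast
  qed
  thus False using nz by auto
qed

lemma det_ker:
  assumes e: "group_endo \<phi>" and k: "\<phi> k = 0" "k \<noteq> 0" and d: "det2 k h = 0"
  shows "\<phi> h = 0"
proof (cases "fst k = 0")
  case False
  have "smul (fst k) h = smul (fst h) k" using d
    by (cases k; cases h) (simp add: smul_def det2_def algebra_simps)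
  hence "smul (fst k) (\<phi> h) = smul (fst h) (\<phi> k)" using endo_smul[OF e] by metis
  thus ?thesis using k False smul_cancel by (simp add: smul_def zero_prod_def)
next
  case True
  hence s: "snd k \<noteq> 0" using k by (cases k) (simp add: zero_prod_def)
  have "smul (snd k) h = smul (snd h) k" using d True
    by (cases k; cases h) (simp add: smul_def det2_def algebra_simps)
  hence "smul (snd k) (\<phi> h) = smul (snd h) (\<phi> k)" using endo_smul[OF e] by metis
  thus ?thesis using k s smul_cancel by (simp add: smul_def zero_prod_def)
qed

lemma det_dep:
  assumes "k \<noteq> 0" "det2 k v = 0" "det2 k w = 0" shows "det2 v w = 0"
proof -
  obtain k1 k2 v1 v2 w1 w2 where kvw: "k = (k1, k2)" "v = (v1, v2)" "w = (w1, w2)"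
    by (cases k; cases v; cases w) auto
  have a: "k1 * v2 = k2 * v1" "k1 * w2 = k2 * w1" using assms(2,3) kvw by (simp_all add: det2_def)
  have "k1 * (v1 * w2 - v2 * w1) = v1 * (k1 * w2) - w1 * (k1 * v2)" by (simp add: algebra_simps)
  also have "\<dots> = 0" using a by (simp add: algebra_simps)
  finally have b1: "k1 * (v1 * w2 - v2 * w1) = 0" .
  have "k2 * (v1 * w2 - v2 * w1) = w2 * (k2 * v1) - v2 * (k2 * w1)" by (simp add: algebra_simps)
  also have "\<dots> = 0" using a[symmetric] by (simp add: algebra_simps)
  finally have b2: "k2 * (v1 * w2 - v2 * w1) = 0" .
  have "fst k * det2 v w = 0" "snd k * det2 v w = 0" using b1 b2 kvw by (simp_all add: det2_def)
  thus ?thesis using assms(1) by (cases k) (auto simp: zero_prod_def)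
qed


lemma lucas:
  "\<exists>a b. tpoly p q dvd monom 1 (Suc n) - [:b, a:] \<and> q dvd b \<and> q dvd a - (-p) ^ n"
proof (induction n)
  case 0
  show ?case by (rule exI[of _ 1], rule exI[of _ 0]) (simp add: monom_Suc one_pCons)
next
  case (Suc n)
  then obtain a b g where ab: "monom 1 (Suc n) - [:b, a:] = tpoly p q * g" "q dvd b"
      "q dvd a - (-p) ^ n" by (auto elim!: dvdE)
  have M: "monom 1 (Suc n) = tpoly p q * g + [:b, a:]" using ab(1) by (simp add: algebra_simps)
  have "monom 1 (Suc (Suc n)) - [:q * a, b - p * a:] = tpoly p q * (pCons 0 g + [:a:])"
    by (simp add: monom_Suc[of 1 "Suc n"] M tpoly_def algebra_simps pCons_eq_iff smult_add_right flip: pCons_one)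
  moreover have "q dvd (b - p * a) - (-p) ^ Suc n"
  proof -
    have eq: "(b - p * a) - (-p) ^ Suc n = b - p * (a - (-p) ^ n)" by (simp add: algebra_simps)
    show ?thesis unfolding eq by (rule dvd_diff[OF ab(2) dvd_mult[OF ab(3)]])
  qed
  ultimately show ?case by (metis dvd_triv_left dvd_triv_left[of q a] mult.commute)
qed

lemma no_xm:
  assumes g: "gcd p q = 1" and q: "\<bar>q\<bar> > 1" and m: "m \<ge> 1" and c: "c \<noteq> 0"
  shows "\<not> tpoly p q dvd smult c (monom 1 m) - [:c':]"
proof
  assume d: "tpoly p q dvd smult c (monom 1 m) - [:c':]"
  obtain n where n: "m = Suc n" using m by (cases m) auto
  obtain a b where ab: "tpoly p q dvd monom 1 m - [:b, a:]" "q dvd a - (-p) ^ n"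
    using lucas[of p q n] n by blast
  have e: "[:c * b - c', c * a:] = (smult c (monom 1 m) - [:c':]) - smult c (monom 1 m - [:b, a:])"
    by (simp add: poly_eq_iff coeff_pCons split: nat.split) (auto simp: algebra_simps)
  have "tpoly p q dvd [:c * b - c', c * a:]"
    unfolding e by (rule dvd_diff[OF d dvd_smult[OF ab(1)]])
  hence "[:c * b - c', c * a:] = 0" by (rule dvd_small_zero) simp
  hence "a = 0" using c by simp
  hence "q dvd (-p) ^ n" using ab(2) by (metis diff_0 dvd_minus_iff)
  moreover have "coprime q ((-p) ^ n)"
  proof -
    have "coprime q p" using g by (simp add: coprime_iff_gcd_eq_1 gcd.commute)
    thus ?thesis by (simp add: coprime_power_right_iff)
  qed
  ultimately have "\<bar>q\<bar> = 1" using coprime_common_divisor_int[of q "(-p)^n" q] by simp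
  thus False using q by simp
qed

lemma poly_pump:
  fixes a b c :: "int list" shows
  "Poly (a @ b @ b @ c) - Poly (a @ b @ c) = monom 1 (length b) * (Poly (a @ b @ c) - Poly (a @ c))"
proof -
  let ?A = "Poly a" and ?B = "Poly b" and ?C = "Poly c" and ?Xa = "monom (1::int) (length a)" and ?Xb = "monom (1::int) (length b)"
  have 1: "Poly (a @ b @ b @ c) = ?A + ?Xa * (?B + ?Xb * (?B + ?Xb * ?C))" by (simp add: Poly_append)
  have 2: "Poly (a @ b @ c) = ?A + ?Xa * (?B + ?Xb * ?C)" by (simp add: Poly_append)
  have 3: "Poly (a @ c) = ?A + ?Xa * ?C" by (simp add: Poly_append)
  show ?thesis unfolding 1 2 3 by (simp add: algebra_simps)
qed
lemma pump_contra:
  assumes g: "gcd p q = 1" and q: "\<bar>q\<bar> > 1" and pr: "prime_elem (tpoly p q)"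
    and e: "group_endo \<phi>" and nz: "\<phi> \<noteq> (\<lambda>_. 0)" and k: "k \<noteq> 0" "\<phi> k = 0"
    and b: "b \<noteq> []"
    and z: "\<phi> (psi p q (a @ c)) = 0" "\<phi> (psi p q (a @ b @ c)) = 0" "\<phi> (psi p q (a @ b @ b @ c)) = 0"
    and nd: "\<not> tpoly p q dvd Poly (a @ b @ c) - Poly (a @ c)"
  shows False
proof -
  define D1 where "D1 = Poly (a @ b @ c) - Poly (a @ c)"
  define D2 where "D2 = Poly (a @ b @ b @ c) - Poly (a @ b @ c)"
  define V1 where "V1 = psi p q (a @ b @ c) - psi p q (a @ c)"
  define V2 where "V2 = psi p q (a @ b @ b @ c) - psi p q (a @ b @ c)"
  define m where "m = length b"
  have D2: "D2 = monom 1 m * D1" unfolding D1_def D2_def m_def by (rule poly_pump)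
  have dv1: "tpoly p q dvd D1 - pp V1"
  proof -
    have "D1 - pp V1 = (Poly (a @ b @ c) - pp (psi p q (a @ b @ c))) - (Poly (a @ c) - pp (psi p q (a @ c)))"
      unfolding D1_def V1_def by (simp flip: pp_diff)
    thus ?thesis using dvd_diff[OF psi_dvd psi_dvd] by metis
  qed
  have dv2: "tpoly p q dvd D2 - pp V2"
  proof -
    have "D2 - pp V2 = (Poly (a @ b @ b @ c) - pp (psi p q (a @ b @ b @ c))) - (Poly (a @ b @ c) - pp (psi p q (a @ b @ c)))"
      unfolding D2_def V2_def by (simp flip: pp_diff)
    thus ?thesis using dvd_diff[OF psi_dvd psi_dvd] by metis
  qed
  have "\<phi> V1 = 0" "\<phi> V2 = 0" unfolding V1_def V2_def using endo_diff[OF e] z by simp_all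
  hence "det2 k V1 = 0" "det2 k V2 = 0" using ker_det[OF e nz k(2)] by auto
  hence dd: "det2 V1 V2 = 0" using det_dep k(1) by blast
  have V1nz: "V1 \<noteq> 0"
  proof
    assume "V1 = 0"
    hence "tpoly p q dvd D1" using dv1 by (simp add: pp_eq0[of 0, simplified])
    thus False using nd D1_def by simp
  qed
  obtain c0 c1 where cc: "c0 \<noteq> 0" "smult c0 (pp V2) = smult c1 (pp V1)"
  proof -
    obtain s1 s2 w1 w2 where sw: "V1 = (s1, s2)" "V2 = (w1, w2)" by (cases V1; cases V2) auto
    have dd': "s1 * w2 = s2 * w1" using dd sw by (simp add: det2_def)
    show ?thesis
    proof (cases "s1 = 0")
      case False
      show ?thesis using that[of s1 w1] False dd' sw by (simp add: pp_def algebra_simps)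
    next
      case True
      hence "s2 \<noteq> 0" using V1nz sw by (simp add: zero_prod_def)
      moreover have "s2 * w1 = 0" using dd' True by simp
      ultimately show ?thesis using that[of s2 w2] True sw by (simp add: pp_def algebra_simps)
    qed
  qed
  have "tpoly p q dvd smult c0 (D2 - pp V2) - smult c1 (D1 - pp V1)"
    using dv1 dv2 by (simp add: dvd_diff dvd_smult)
  moreover have "smult c0 (D2 - pp V2) - smult c1 (D1 - pp V1) = D1 * (smult c0 (monom 1 m) - [:c1:])"
    using cc(2) by (simp add: D2 algebra_simps smult_diff_right)
  ultimately have "tpoly p q dvd D1 * (smult c0 (monom 1 m) - [:c1:])" by simp
  hence "tpoly p q dvd smult c0 (monom 1 m) - [:c1:]"
    using pr nd D1_def by (simp add: prime_elem_dvd_mult_iff)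
  moreover have "m \<ge> 1" using b m_def by (cases b) auto
  ultimately show False using no_xm[OF g q _ cc(1)] by blast
qed

definition Nr :: "int \<Rightarrow> int \<Rightarrow> int list \<Rightarrow> real" where
  "Nr p q w = (real_of_int \<bar>q\<bar> - 1/2) * \<bar>real_of_int (fst (rep p q w))\<bar> + \<bar>real_of_int (snd (rep p q w))\<bar>"

lemma key_ineq: fixes P Q \<rho> :: real assumes "P \<le> Q - 2" "Q \<ge> 2" "P \<ge> 0" "\<rho> = Q - 1/2"
  shows "\<rho> * P + Q \<le> \<rho> * \<rho>"
proof -
  have "\<rho> * P \<le> \<rho> * (Q - 2)" using assms by (intro mult_left_mono) auto
  moreover have "Q - 2 = \<rho> - 3/2" using assms(4) by simp
  hence "\<rho> * (Q - 2) = \<rho> * \<rho> - \<rho> * (3/2)" by (simp only: right_diff_distrib)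
  moreover have "\<rho> * (3/2) \<ge> Q" using assms by simp
  ultimately show ?thesis by linarith
qed

lemma Nr_step:
  assumes pq: "1 + \<bar>p\<bar> < \<bar>q\<bar>" and d: "\<bar>d\<bar> \<le> \<bar>q\<bar> - 1"
  shows "Nr p q (d # w) \<le> (real_of_int \<bar>q\<bar> - 1/2) * Nr p q w + (real_of_int \<bar>q\<bar> - 1)"
proof -
  define Q where "Q = real_of_int \<bar>q\<bar>"
  define P where "P = real_of_int \<bar>p\<bar>"
  define \<rho> where "\<rho> = Q - 1/2"
  define h1 where "h1 = real_of_int (fst (rep p q w))"
  define h2 where "h2 = real_of_int (snd (rep p q w))"
  have PQ: "P \<le> Q - 2" using pq unfolding P_def Q_def by linarith
  have P0: "P \<ge> 0" unfolding P_def by simp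
  have Q2: "Q \<ge> 2" using pq unfolding Q_def by linarith
  have key: "\<rho> * P + Q \<le> \<rho> * \<rho>" by (rule key_ineq[OF PQ Q2 P0 \<rho>_def])
  have e: "Nr p q (d # w) = \<rho> * \<bar>h2 - real_of_int p * h1\<bar> + \<bar>real_of_int q * h1 + real_of_int d\<bar>"
    by (simp add: Nr_def \<rho>_def Q_def h1_def h2_def)
  have "\<bar>h2 - real_of_int p * h1\<bar> \<le> \<bar>h2\<bar> + P * \<bar>h1\<bar>"
    unfolding P_def by (metis abs_mult abs_triangle_ineq4 of_int_abs)
  hence "\<rho> * \<bar>h2 - real_of_int p * h1\<bar> \<le> \<rho> * (\<bar>h2\<bar> + P * \<bar>h1\<bar>)"
    using Q2 unfolding \<rho>_def by (intro mult_left_mono) auto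
  hence a1: "\<rho> * \<bar>h2 - real_of_int p * h1\<bar> \<le> \<rho> * \<bar>h2\<bar> + \<rho> * P * \<bar>h1\<bar>"
    by (simp add: distrib_left mult.assoc)
  have a2: "\<bar>real_of_int q * h1 + real_of_int d\<bar> \<le> Q * \<bar>h1\<bar> + (Q - 1)"
  proof -
    have "\<bar>real_of_int q * h1 + real_of_int d\<bar> \<le> \<bar>real_of_int q * h1\<bar> + \<bar>real_of_int d\<bar>" by (rule abs_triangle_ineq)
    moreover have "\<bar>real_of_int d\<bar> \<le> Q - 1" using d unfolding Q_def by linarith
    ultimately show ?thesis by (simp add: Q_def abs_mult)
  qed
  have a3: "(\<rho> * P + Q) * \<bar>h1\<bar> \<le> \<rho> * \<rho> * \<bar>h1\<bar>" using key by (intro mult_right_mono) auto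
  have "Nr p q (d # w) \<le> \<rho> * \<bar>h2\<bar> + (\<rho> * P + Q) * \<bar>h1\<bar> + (Q - 1)"
    using e a1 a2 by (simp add: algebra_simps)
  also have "\<dots> \<le> \<rho> * \<bar>h2\<bar> + \<rho> * \<rho> * \<bar>h1\<bar> + (Q - 1)" using a3 by simp
  also have "\<dots> = \<rho> * Nr p q w + (Q - 1)"
  proof -
    have "Nr p q w = \<rho> * \<bar>h1\<bar> + \<bar>h2\<bar>" by (simp add: Nr_def \<rho>_def Q_def h1_def h2_def)
    thus ?thesis by (simp add: distrib_left mult.assoc)
  qed
  finally show ?thesis by (simp add: \<rho>_def Q_def)
qed

lemma lin_aux: "(b::real) \<le> X - Y \<Longrightarrow> c + e \<le> Y \<Longrightarrow> a \<le> b + c \<Longrightarrow> a + e \<le> X"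
  by linarith

lemma Nr_bound:
  assumes pq: "1 + \<bar>p\<bar> < \<bar>q\<bar>" and w: "set w \<subseteq> Sigma q"
  shows "Nr p q w + 2 * (real_of_int \<bar>q\<bar> - 1) \<le> 2 * (real_of_int \<bar>q\<bar> - 1) * (real_of_int \<bar>q\<bar> - 1/2) ^ length w"
  using w
proof (induction w)
  case Nil thus ?case by (simp add: Nr_def)
next
  case (Cons d w)
  define Q where "Q = real_of_int \<bar>q\<bar>"
  define \<rho> where "\<rho> = Q - 1/2"
  have Q2: "Q \<ge> 2" using pq unfolding Q_def by linarith
  have d: "\<bar>d\<bar> \<le> \<bar>q\<bar> - 1" using Cons.prems by (auto simp: Sigma_def)
  have IH: "Nr p q w + 2 * (Q - 1) \<le> 2 * (Q - 1) * \<rho> ^ length w"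
    using Cons unfolding Q_def \<rho>_def by auto
  have st: "Nr p q (d # w) \<le> \<rho> * Nr p q w + (Q - 1)"
    using Nr_step[OF pq d] unfolding \<rho>_def Q_def .
  have "\<rho> * Nr p q w \<le> \<rho> * (2 * (Q - 1) * \<rho> ^ length w - 2 * (Q - 1))"
    using IH Q2 unfolding \<rho>_def by (intro mult_left_mono) auto
  hence "\<rho> * Nr p q w \<le> \<rho> * (2 * (Q - 1) * \<rho> ^ length w) - \<rho> * (2 * (Q - 1))"
    by (simp only: right_diff_distrib)
  moreover have "(Q - 1) + 2 * (Q - 1) \<le> \<rho> * (2 * (Q - 1))"
  proof -
    have "(Q - 1) * 3 \<le> (Q - 1) * (2 * \<rho>)" using Q2 unfolding \<rho>_def by (intro mult_left_mono) auto
    thus ?thesis by (simp add: algebra_simps)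
  qed
  ultimately have "Nr p q (d # w) + 2 * (Q - 1) \<le> \<rho> * (2 * (Q - 1) * \<rho> ^ length w)"
    using st by (rule lin_aux)
  also have "\<dots> = 2 * (Q - 1) * \<rho> ^ length (d # w)" by (simp only: list.size power_Suc mult_ac) simp
  finally show ?case unfolding Q_def \<rho>_def .
qed

lemma pcons_dvd_q:
  assumes "tpoly p q dvd pCons c P" shows "q dvd c"
proof -
  obtain g where g: "pCons c P = tpoly p q * g" using assms by (auto elim!: dvdE)
  have "c = poly (pCons c P) 0" by simp
  also have "\<dots> = - q * poly g 0" unfolding g by (simp add: tpoly_def)
  finally show ?thesis by simp
qed

lemma inj_digits:
  assumes pr: "prime_elem (tpoly p q)"
  shows "length w = length w' \<Longrightarrow> set w \<subseteq> {0..\<bar>q\<bar>-1} \<Longrightarrow> set w' \<subseteq> {0..\<bar>q\<bar>-1}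
    \<Longrightarrow> tpoly p q dvd Poly w - Poly w' \<Longrightarrow> w = w'"
proof (induction w arbitrary: w')
  case Nil thus ?case by simp
next
  case (Cons d u)
  then obtain e u' where w': "w' = e # u'" by (cases w') auto
  have dv: "tpoly p q dvd pCons (d - e) (Poly u - Poly u')" using Cons.prems(4) w' by simp
  hence "q dvd d - e" by (rule pcons_dvd_q)
  moreover have "\<bar>d - e\<bar> < \<bar>q\<bar>" using Cons.prems(2,3) w' by auto
  ultimately have de: "d = e"
    by (metis dvd_imp_le_int abs_ge_zero abs_le_D1 eq_iff_diff_eq_0 leD)
  have "pCons 0 (Poly u - Poly u') = [:0, 1:] * (Poly u - Poly u')" by simp
  hence "tpoly p q dvd [:0, 1:] * (Poly u - Poly u')" using dv de by simp
  moreover have "\<not> tpoly p q dvd [:0, 1:]"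
    using dvd_small_zero[of p q "[:0,1:]"] by auto
  ultimately have "tpoly p q dvd Poly u - Poly u'" using pr prime_elem_dvd_mult_iff by blast
  hence "u = u'" using Cons.IH[of u'] Cons.prems w' by simp
  thus ?case using de w' by simp
qed

lemma map2_sub:
  "length w = length w0 \<Longrightarrow> set w \<subseteq> {0..\<bar>q\<bar>-1} \<Longrightarrow> set w0 \<subseteq> {0..\<bar>q\<bar>-1}
   \<Longrightarrow> map2 (-) w w0 \<in> strings q \<and> Poly (map2 (-) w w0) = Poly w - Poly w0"
proof (induction w arbitrary: w0)
  case Nil thus ?case by (simp add: strings_def)
next
  case (Cons d u)
  then obtain e u' where w': "w0 = e # u'" by (cases w0) auto
  have "map2 (-) u u' \<in> strings q \<and> Poly (map2 (-) u u') = Poly u - Poly u'"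
    using Cons w' by simp
  moreover have "d - e \<in> Sigma q" using Cons.prems w' by (auto simp: Sigma_def)
  ultimately show ?case using w' by (simp add: strings_def)
qed

lemma psi_sub: "Poly d = Poly w - Poly w0 \<Longrightarrow> psi p q d = psi p q w - psi p q w0"
proof (rule psi_char)
  assume "Poly d = Poly w - Poly w0"
  hence "Poly d - pp (psi p q w - psi p q w0) = (Poly w - pp (psi p q w)) - (Poly w0 - pp (psi p q w0))"
    by (simp flip: pp_diff)
  thus "tpoly p q dvd Poly d - pp (psi p q w - psi p q w0)" using dvd_diff[OF psi_dvd psi_dvd] by metis
qed

lemma psi_eq_dvd: "psi p q w = psi p q w' \<Longrightarrow> tpoly p q dvd Poly w - Poly w'"
proof -
  assume e: "psi p q w = psi p q w'"
  have "Poly w - Poly w' = (Poly w - pp (psi p q w)) - (Poly w' - pp (psi p q w'))" using e by simp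
  thus ?thesis using dvd_diff[OF psi_dvd psi_dvd] by metis
qed

lemma det2_diff: "det2 k (a - b) = det2 k a - det2 k b"
  by (cases a; cases b) (simp add: det2_def algebra_simps)

lemma det2_bound:
  assumes "\<rho> \<ge> 1"
  shows "\<bar>real_of_int (det2 k h)\<bar> \<le> real_of_int (\<bar>fst k\<bar> + \<bar>snd k\<bar>) * (\<rho> * \<bar>real_of_int (fst h)\<bar> + \<bar>real_of_int (snd h)\<bar>)"
proof -
  define a where "a = \<bar>real_of_int (fst k)\<bar>"
  define b where "b = \<bar>real_of_int (snd k)\<bar>"
  define x where "x = \<bar>real_of_int (fst h)\<bar>"
  define y where "y = \<bar>real_of_int (snd h)\<bar>"
  have "\<bar>real_of_int (det2 k h)\<bar> \<le> a * y + b * x"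
    unfolding det2_def a_def b_def x_def y_def
    by (metis abs_mult abs_triangle_ineq4 of_int_diff of_int_mult)
  moreover have "b * x \<le> b * (\<rho> * x)" using assms unfolding b_def x_def
    by (intro mult_left_mono) (auto simp: mult_le_cancel_right1)
  moreover have "0 \<le> a * (\<rho> * x)" "0 \<le> b * y" using assms by (auto simp: a_def b_def x_def y_def)
  ultimately have "\<bar>real_of_int (det2 k h)\<bar> \<le> (a + b) * (\<rho> * x + y)" by (simp add: algebra_simps)
  thus ?thesis by (simp add: a_def b_def x_def y_def)
qed

lemma growth:
  fixes Q \<rho> A M :: real
  assumes "0 \<le> \<rho>" "\<rho> < Q" "1 < Q"
  shows "\<exists>n. A * \<rho> ^ n + M < Q ^ n"
proof -
  have l1: "(\<lambda>n. (\<rho> / Q) ^ n) \<longlonglongrightarrow> 0" using assms by (intro LIMSEQ_power_zero) auto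
  have l2: "(\<lambda>n. (1 / Q) ^ n) \<longlonglongrightarrow> 0" using assms by (intro LIMSEQ_power_zero) auto
  have "(\<lambda>n. A * (\<rho> / Q) ^ n + M * (1 / Q) ^ n) \<longlonglongrightarrow> A * 0 + M * 0"
    by (intro tendsto_intros l1 l2)
  hence "eventually (\<lambda>n. A * (\<rho> / Q) ^ n + M * (1 / Q) ^ n < 1) sequentially"
    by (intro order_tendstoD(2)) auto
  then obtain n where n: "A * (\<rho> / Q) ^ n + M * (1 / Q) ^ n < 1" by (auto simp: eventually_sequentially)
  have Qn: "Q ^ n > 0" using assms by simp
  have "Q ^ n * (A * (\<rho> / Q) ^ n + M * (1 / Q) ^ n) < Q ^ n * 1"
    using n Qn by (intro mult_strict_left_mono) auto
  moreover have "Q ^ n * (A * (\<rho> / Q) ^ n + M * (1 / Q) ^ n) = A * \<rho> ^ n + M"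
    using assms by (simp add: power_divide field_simps)
  ultimately show ?thesis by auto
qed

lemma many_kernel:
  assumes pq: "1 + \<bar>p\<bar> < \<bar>q\<bar>" and pr: "prime_elem (tpoly p q)" and k: "k \<noteq> 0"
  shows "infinite {z. \<exists>d\<in>strings q. psi p q d = z \<and> det2 k z = 0}"
proof
  define P where "P = {z. \<exists>d\<in>strings q. psi p q d = z \<and> det2 k z = 0}"
  assume fin: "finite {z. \<exists>d\<in>strings q. psi p q d = z \<and> det2 k z = 0}"
  hence finP: "finite P" unfolding P_def .
  define M where "M = card P"
  define \<rho> where "\<rho> = real_of_int \<bar>q\<bar> - 1/2"
  define K where "K = real_of_int (\<bar>fst k\<bar> + \<bar>snd k\<bar>)"
  define C where "C = 2 * (real_of_int \<bar>q\<bar> - 1)"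
  have q2: "\<bar>q\<bar> \<ge> 2" using pq by simp
  have \<rho>1: "\<rho> \<ge> 1" "\<rho> < real_of_int \<bar>q\<bar>" using q2 unfolding \<rho>_def by simp_all
  have K0: "K \<ge> 0" and C0: "C \<ge> 0" using q2 unfolding K_def C_def by simp_all
  obtain n where n: "(2 * real M * K * C) * \<rho> ^ n + real M < real_of_int \<bar>q\<bar> ^ n"
    using growth[of \<rho> "real_of_int \<bar>q\<bar>" "2 * real M * K * C" "real M"] \<rho>1 q2 by auto
  define D where "D = {0..\<bar>q\<bar>-1}"
  define S where "S = {w. set w \<subseteq> D \<and> length w = n}"
  have finD: "finite D" unfolding D_def by simp
  have cardD: "card D = nat \<bar>q\<bar>" unfolding D_def by simp
  have finS: "finite S" unfolding S_def using finite_lists_length_eq[OF finD] by simp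
  have cardS: "card S = nat \<bar>q\<bar> ^ n" unfolding S_def using card_lists_length_eq[OF finD] cardD by simp
  define g where "g w = det2 k (psi p q w)" for w
  define B where "B = \<lfloor>K * C * \<rho> ^ n\<rfloor>"
  have B0: "B \<ge> 0" unfolding B_def using K0 C0 \<rho>1 by simp
  have gB: "g w \<in> {-B..B}" if w: "w \<in> S" for w
  proof -
    have sw: "set w \<subseteq> Sigma q" using w q2 unfolding S_def D_def Sigma_def by auto
    have lw: "length w = n" using w unfolding S_def by simp
    have "\<bar>real_of_int (g w)\<bar> \<le> K * Nr p q w"
      using det2_bound[OF \<rho>1(1), of k "psi p q w"] unfolding g_def K_def Nr_def \<rho>_def psi_eq by simp
    also have "\<dots> \<le> K * (C * \<rho> ^ n)"
      using Nr_bound[OF pq sw] lw C0 K0 unfolding C_def \<rho>_def by (intro mult_left_mono) auto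
    finally have "\<bar>real_of_int (g w)\<bar> \<le> K * C * \<rho> ^ n" by (simp add: mult.assoc)
    hence "\<bar>g w\<bar> \<le> B" unfolding B_def by (simp add: le_floor_iff)
    thus ?thesis by auto
  qed
  have "\<exists>y. card {w \<in> S. g w = y} > M"
  proof (rule ccontr)
    assume "\<not> (\<exists>y. card {w \<in> S. g w = y} > M)"
    hence le: "card {w \<in> S. g w = y} \<le> M" for y using leI by blast
    have Seq: "S = (\<Union>y\<in>{-B..B}. {w \<in> S. g w = y})" using gB by auto
    have "card (\<Union>y\<in>{-B..B}. {w \<in> S. g w = y}) \<le> (\<Sum>y\<in>{-B..B}. card {w \<in> S. g w = y})"
      by (rule card_UN_le) simp
    hence "card S \<le> (\<Sum>y\<in>{-B..B}. card {w \<in> S. g w = y})" using Seq by simp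
    also have "\<dots> \<le> (\<Sum>y\<in>{-B..B}. M)" by (intro sum_mono le)
    also have "\<dots> = M * nat (2 * B + 1)" by simp
    finally have "real (card S) \<le> real (M * nat (2 * B + 1))" by (simp only: of_nat_le_iff)
    hence "real (card S) \<le> real M * real (nat (2 * B + 1))" by (simp only: of_nat_mult)
    also have "real (nat (2 * B + 1)) = 2 * real_of_int B + 1" using B0 by simp
    finally have a: "real (card S) \<le> real M * (2 * real_of_int B + 1)" .
    have "real_of_int B \<le> K * C * \<rho> ^ n" unfolding B_def by simp
    hence "real M * (2 * real_of_int B + 1) \<le> real M * (2 * (K * C * \<rho> ^ n) + 1)"
      by (intro mult_left_mono) auto
    also have "\<dots> = (2 * real M * K * C) * \<rho> ^ n + real M" by (simp add: algebra_simps)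
    finally have "real (card S) < real_of_int \<bar>q\<bar> ^ n" using a n by linarith
    moreover have "real (card S) = real_of_int \<bar>q\<bar> ^ n" using cardS q2 by simp
    ultimately show False by simp
  qed
  then obtain y where y: "card {w \<in> S. g w = y} > M" by blast
  define F where "F = {w \<in> S. g w = y}"
  have "F \<noteq> {}" using y unfolding F_def by (metis card.empty not_less0)
  then obtain w0 where w0: "w0 \<in> F" by blast
  define h where "h w = psi p q w - psi p q w0" for w
  have inj: "inj_on h F"
  proof
    fix w w' assume ww: "w \<in> F" "w' \<in> F" "h w = h w'"
    hence "psi p q w = psi p q w'" unfolding h_def by simp
    hence "tpoly p q dvd Poly w - Poly w'" by (rule psi_eq_dvd)
    thus "w = w'" using inj_digits[OF pr] ww unfolding F_def S_def D_def by auto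
  qed
  have sub: "h ` F \<subseteq> P"
  proof
    fix z assume "z \<in> h ` F"
    then obtain w where w: "w \<in> F" "z = h w" by blast
    have lw: "length w = length w0" "set w \<subseteq> {0..\<bar>q\<bar>-1}" "set w0 \<subseteq> {0..\<bar>q\<bar>-1}"
      using w w0 unfolding F_def S_def D_def by auto
    from map2_sub[OF lw] have d: "map2 (-) w w0 \<in> strings q" and
      pd: "Poly (map2 (-) w w0) = Poly w - Poly w0" by auto
    have "psi p q (map2 (-) w w0) = z" using psi_sub[OF pd] w(2) unfolding h_def by simp
    moreover have "det2 k z = 0" using w w0 unfolding h_def F_def g_def by (simp add: det2_diff)
    ultimately show "z \<in> P" using d unfolding P_def by blast
  qed
  have "card F = card (h ` F)" using inj by (simp add: card_image)
  also have "\<dots> \<le> M" unfolding M_def by (rule card_mono[OF finP sub])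
  finally show False using y unfolding F_def by simp
qed


lemma conv_Nil: "conv u [] = map (\<lambda>a. (Some a, None)) u"
  by (rule nth_equalityI) (simp_all add: conv_def)

lemma conv_length: "length (conv u v) = max (length u) (length v)"
  by (simp add: conv_def)

lemma conv_nth: "i < max (length u) (length v) \<Longrightarrow>
  conv u v ! i = (if i < length u then Some (u ! i) else None, if i < length v then Some (v ! i) else None)"
  by (simp add: conv_def)

lemma conv_len_le:
  assumes e: "conv u v = conv u' v'" shows "length u \<le> length u' \<and> length v \<le> length v'"
proof (rule ccontr)
  have L: "max (length u) (length v) = max (length u') (length v')" using e conv_length by metis
  assume "\<not> (length u \<le> length u' \<and> length v \<le> length v')"
  then consider "length u' < length u" | "length v' < length v" by linarith
  thus False
  proof cases
    case 1
    have "conv u v ! length u' = conv u' v' ! length u'" using e by simp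
    thus False using 1 L conv_nth[of "length u'" u v] conv_nth[of "length u'" u' v'] by auto
  next
    case 2
    have "conv u v ! length v' = conv u' v' ! length v'" using e by simp
    thus False using 2 L conv_nth[of "length v'" u v] conv_nth[of "length v'" u' v'] by auto
  qed
qed

lemma conv_inj:
  assumes e: "conv u v = conv u' v'" shows "u = u' \<and> v = v'"
proof -
  have l: "length u = length u'" "length v = length v'"
    using conv_len_le[OF e] conv_len_le[OF e[symmetric]] by auto
  have "u ! i = u' ! i" if "i < length u" for i
  proof -
    have "conv u v ! i = conv u' v' ! i" using e by simp
    thus ?thesis using that l conv_nth[of i u v] conv_nth[of i u' v'] by auto
  qed
  moreover have "v ! i = v' ! i" if "i < length v" for i
  proof -
    have "conv u v ! i = conv u' v' ! i" using e by simp
    thus ?thesis using that l conv_nth[of i u v] conv_nth[of i u' v'] by auto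
  qed
  ultimately show ?thesis using l by (auto intro: nth_equalityI)
qed

lemma foldl_closed: "r \<in> Qs \<Longrightarrow> \<forall>r\<in>Qs. \<forall>a. \<delta> r a \<in> Qs \<Longrightarrow> foldl \<delta> r w \<in> Qs"
  by (induction w arbitrary: r) auto

lemma pump:
  assumes fin: "finite Qs" and s: "s \<in> Qs" and cl: "\<forall>r\<in>Qs. \<forall>a. \<delta> r a \<in> Qs"
    and len: "length u \<ge> card Qs"
  shows "\<exists>a b c. u = a @ b @ c \<and> b \<noteq> [] \<and> foldl \<delta> s (a @ c) = foldl \<delta> s u
            \<and> foldl \<delta> s (a @ b @ b @ c) = foldl \<delta> s u"
proof -
  define st where "st i = foldl \<delta> s (take i u)" for i
  have "\<not> inj_on st {..length u}"
  proof
    assume "inj_on st {..length u}"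
    moreover have "st ` {..length u} \<subseteq> Qs" using foldl_closed[OF s cl] unfolding st_def by auto
    ultimately have "card {..length u} \<le> card Qs" using card_inj_on_le fin by blast
    thus False using len by simp
  qed
  then obtain i j where ij: "i \<le> length u" "j \<le> length u" "i \<noteq> j" "st i = st j"
    unfolding inj_on_def by auto
  obtain i' j' where ij': "i' < j'" "j' \<le> length u" "st i' = st j'"
    using ij by (metis linorder_neq_iff)
  define a where "a = take i' u"
  define b where "b = drop i' (take j' u)"
  define c where "c = drop j' u"
  have ab: "a @ b = take j' u" unfolding a_def b_def using ij'
    by (metis append_take_drop_id min.absorb1 less_imp_le take_take)
  have u: "u = a @ b @ c" using ab unfolding c_def by (metis append.assoc append_take_drop_id)
  have bne: "b \<noteq> []" unfolding b_def using ij' by simp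
  have fa: "foldl \<delta> (foldl \<delta> s a) b = foldl \<delta> s a"
    using ij'(3) ab unfolding st_def a_def by (metis foldl_append)
  have "foldl \<delta> s (a @ c) = foldl \<delta> s u" using u fa by simp
  moreover have "foldl \<delta> s (a @ b @ b @ c) = foldl \<delta> s u" using u fa by simp
  ultimately show ?thesis using u bne by blast
qed


theorem mainTheorem8:
  fixes p q :: int and \<phi> :: "int \<times> int \<Rightarrow> int \<times> int"
  assumes "1 + \<bar>p\<bar> < \<bar>q\<bar>"
    and "gcd p q = 1"
    and "irreducible (tpoly p q)"
    and "group_endo \<phi>"
    and "\<phi> \<noteq> (\<lambda>_. 0)"
    and "\<exists>v. v \<noteq> 0 \<and> \<phi> v = 0"
  shows "\<not> FA_recognizable_rel
           {(u, v). u \<in> Dom p q \<and> v \<in> Dom p q \<and> psi p q v = \<phi> (psi p q u)}"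
proof
  note pq = assms(1) and g = assms(2) and e = assms(4) and nz = assms(5)
  have pr: "prime_elem (tpoly p q)" using assms(3) by (simp add: prime_elem_iff_irreducible)
  have q1: "\<bar>q\<bar> > 1" using pq by simp
  obtain k where k: "k \<noteq> 0" "\<phi> k = 0" using assms(6) by blast
  define R where "R = {(u, v). u \<in> Dom p q \<and> v \<in> Dom p q \<and> psi p q v = \<phi> (psi p q u)}"
  assume "FA_recognizable_rel {(u, v). u \<in> Dom p q \<and> v \<in> Dom p q \<and> psi p q v = \<phi> (psi p q u)}"
  then obtain Qs :: "nat set" and \<delta> s F where A: "finite Qs" "s \<in> Qs" "\<forall>r\<in>Qs. \<forall>a. \<delta> r a \<in> Qs" "F \<subseteq> Qs"
    "{conv u v | u v. (u, v) \<in> R} = {w. foldl \<delta> s w \<in> F}"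
    unfolding FA_recognizable_rel_def FA_recognizable_lang_def R_def by blast
  define \<delta>' where "\<delta>' = (\<lambda>r a. \<delta> r (Some a, None))"
  have cl': "\<forall>r\<in>Qs. \<forall>a. \<delta>' r a \<in> Qs" using A(3) unfolding \<delta>'_def by auto
  define Kset where "Kset = {u \<in> Dom p q. \<phi> (psi p q u) = 0}"
  have keyK: "u \<in> Kset \<longleftrightarrow> foldl \<delta>' s u \<in> F" for u
  proof -
    have f: "foldl \<delta>' s u = foldl \<delta> s (conv u [])"
      by (simp add: conv_Nil foldl_map \<delta>'_def)
    have "(u, []) \<in> R \<longleftrightarrow> conv u [] \<in> {conv u v | u v. (u, v) \<in> R}"
      using conv_inj by blast
    also have "\<dots> \<longleftrightarrow> foldl \<delta>' s u \<in> F" using A(5) f by simp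
    finally have "(u, []) \<in> R \<longleftrightarrow> foldl \<delta>' s u \<in> F" .
    moreover have "(u, []) \<in> R \<longleftrightarrow> u \<in> Kset"
      unfolding R_def Kset_def using Nil_Dom psi_Nil by (auto simp: eq_commute[of 0])
    ultimately show ?thesis by simp
  qed
  have infK: "infinite Kset"
  proof
    assume finK: "finite Kset"
    have "{z. \<exists>d\<in>strings q. psi p q d = z \<and> det2 k z = 0} \<subseteq> psi p q ` Kset"
    proof
      fix z assume "z \<in> {z. \<exists>d\<in>strings q. psi p q d = z \<and> det2 k z = 0}"
      then obtain d where d: "d \<in> strings q" "psi p q d = z" "det2 k z = 0" by blast
      obtain u where u: "u \<in> Dom p q" "str_equiv p q u d" using Dom_exists[OF d(1)] by blast
      have "Poly u - pp (psi p q d) = (Poly u - Poly d) + (Poly d - pp (psi p q d))" by simp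
      hence "tpoly p q dvd Poly u - pp (psi p q d)"
        using u(2) psi_dvd[of p q d] unfolding str_equiv_def by (metis dvd_add)
      hence "psi p q u = z" using psi_char d(2) by metis
      moreover have "\<phi> z = 0" using det_ker[OF e k(2) k(1) d(3)] .
      ultimately show "z \<in> psi p q ` Kset" using u(1) unfolding Kset_def by blast
    qed
    hence "finite {z. \<exists>d\<in>strings q. psi p q d = z \<and> det2 k z = 0}"
      using finK by (meson finite_imageI finite_subset)
    thus False using many_kernel[OF pq pr k(1)] by simp
  qed
  have "\<exists>u\<in>Kset. length u \<ge> card Qs"
  proof (rule ccontr)
    assume "\<not> (\<exists>u\<in>Kset. length u \<ge> card Qs)"
    hence "Kset \<subseteq> {w \<in> strings q. length w \<le> card Qs}"
      unfolding Kset_def Dom_def by auto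
    thus False using infK finite_strings_le finite_subset by blast
  qed
  then obtain u where u: "u \<in> Kset" "length u \<ge> card Qs" by blast
  obtain a b c where abc: "u = a @ b @ c" "b \<noteq> []" "foldl \<delta>' s (a @ c) = foldl \<delta>' s u"
      "foldl \<delta>' s (a @ b @ b @ c) = foldl \<delta>' s u"
    using pump[OF A(1) A(2) cl' u(2)] by blast
  have K1: "a @ c \<in> Kset" and K2: "a @ b @ c \<in> Kset" and K3: "a @ b @ b @ c \<in> Kset"
    using keyK u abc by auto
  have nd: "\<not> tpoly p q dvd Poly (a @ b @ c) - Poly (a @ c)"
  proof
    assume dv: "tpoly p q dvd Poly (a @ b @ c) - Poly (a @ c)"
    have "str_equiv p q (a @ c) (a @ b @ c)" unfolding str_equiv_def
      using dv by (metis dvd_minus_iff minus_diff_eq)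
    moreover have "llex_less (a @ c) (a @ b @ c)" using abc(2) by (intro llex_shorter) simp
    moreover have "a @ c \<in> strings q" using K1 unfolding Kset_def Dom_def by simp
    ultimately show False using K2 unfolding Kset_def Dom_def by blast
  qed
  show False
    by (rule pump_contra[OF g q1 pr e nz k abc(2) _ _ _ nd])
       (use K1 K2 K3 in \<open>simp_all add: Kset_def\<close>)
qed

end
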